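(* $X=\{x\in\mathrm{Cay}:\tilde\upsilon(\gamma(x))=\mathrm{sort}(x)\}$.
   Context: $\mathrm{Cay}$ is the set of Cayley permutations (words of positive integers in which every integer from $1$ to the maximum occurs); $\mathrm{sort}(x)$ is the weakly increasing rearrangement of $x$. For $x$ of length $n$, $\gamma(x)$ is the permutation of $[n]$ obtained by sorting the pairs $(x(i),i)$ increasingly by first coordinate, ties by decreasing second coordinate, and reading off the second coordinates. For a permutation $\pi$ of $[n]$ and $i\in[n]$, let $J(i)=0$ if $\pi(i)=1$ and otherwise $J(i)$ is the index with $\pi(J(i))=\pi(i)-1$. The site before $\pi(1)$ is $\eta$-active; the site after $\pi(i)$ is $\eta$-active iff $J(i)<i$, or $i<n$ and $\pi(i)<\pi(i+1)$. $\tilde\upsilon(\pi)$ is the word of length $n$ whose $j$-th letter is the number of $\eta$-active sites to the left of $\pi(j)$. $\eta(\pi)$ is the word with $\eta(\pi)(\pi(j))=\tilde\upsilon(\pi)(j)$ for all $j$, and $X=\{\eta(\pi):\pi\text{ a permutation}\}$. *)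

theory Defs
  imports Main "HOL-Library.Product_Lexorder"
begin

text \<open>Words are lists of naturals; positions and letters are 1-indexed:
  the i-th letter of w (1 \<le> i \<le> length w) is w ! (i-1).\<close>

definition letter :: "nat list \<Rightarrow> nat \<Rightarrow> nat" where
  "letter w i = w ! (i - 1)"

definition Cay :: "nat list set" where
  "Cay = {x. 0 \<notin> set x \<and> (\<forall>k. 1 \<le> k \<and> k \<le> Max (insert 0 (set x)) \<longrightarrow> k \<in> set x)}"

definition is_perm :: "nat list \<Rightarrow> bool" where
  "is_perm p \<longleftrightarrow> distinct p \<and> set p = {1..length p}"

definition gamma :: "nat list \<Rightarrow> nat list" where
  "gamma x = map snd (sort_key (\<lambda>(v, i). (v, - int i)) (zip x [1..<length x + 1]))"

definition Jidx :: "nat list \<Rightarrow> nat \<Rightarrow> nat" where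
  "Jidx p i = (if letter p i = 1 then 0
               else (THE k. 1 \<le> k \<and> k \<le> length p \<and> letter p k = letter p i - 1))"

text \<open>Site k (0 \<le> k \<le> n) is the site after p(k); site 0 is the site before p(1).\<close>
definition eta_active :: "nat list \<Rightarrow> nat \<Rightarrow> bool" where
  "eta_active p k \<longleftrightarrow> k = 0 \<or>
     (1 \<le> k \<and> k \<le> length p \<and>
      (Jidx p k < k \<or> (k < length p \<and> letter p k < letter p (k + 1))))"

definition upsilon_t :: "nat list \<Rightarrow> nat list" where
  "upsilon_t p = map (\<lambda>j. card {k. k < j \<and> eta_active p k}) [1..<length p + 1]"

definition eta :: "nat list \<Rightarrow> nat list" where
  "eta p = map (\<lambda>v. letter (upsilon_t p)
                 (THE j. 1 \<le> j \<and> j \<le> length p \<and> letter p j = v)) [1..<length p + 1]"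

definition Xset :: "nat list set" where
  "Xset = {eta p | p. is_perm p}"

end

theory Submission
  imports Defs "HOL-Library.Multiset"
begin

declare upt_Suc[simp del]

lemma length_ups[simp]: "length (upsilon_t p) = length p"
  by (simp add: upsilon_t_def)

lemma length_eta[simp]: "length (eta p) = length p"
  by (simp add: eta_def)

lemma length_gamma[simp]: "length (gamma x) = length x"
  by (simp add: gamma_def)

lemma ups_nth: "j < length p \<Longrightarrow> upsilon_t p ! j = card {k. k < Suc j \<and> eta_active p k}"
  by (simp add: upsilon_t_def add.commute)

lemma card_step: "card {k. k < Suc j \<and> P k} = card {k::nat. k < j \<and> P k} + (if P j then 1 else 0)"
proof -
  have "{k. k < Suc j \<and> P k} = {k. k < j \<and> P k} \<union> (if P j then {j} else {})"
    by (auto simp: less_Suc_eq)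
  then show ?thesis by auto
qed

lemma ups_0: "0 < length p \<Longrightarrow> upsilon_t p ! 0 = 1"
proof -
  assume "0 < length p"
  moreover have "{k. k < Suc 0 \<and> eta_active p k} = {0}" by (auto simp: eta_active_def)
  ultimately show ?thesis by (simp add: ups_nth)
qed

lemma ups_Suc: "Suc j < length p \<Longrightarrow>
   upsilon_t p ! Suc j = upsilon_t p ! j + (if eta_active p (Suc j) then 1 else 0)"
  using card_step[of "Suc j" "eta_active p"] by (simp add: ups_nth)

lemma ups_sorted: "sorted (upsilon_t p)"
  unfolding sorted_iff_nth_Suc by (auto simp: ups_Suc)

lemma ups_pos: "j < length p \<Longrightarrow> 1 \<le> upsilon_t p ! j"
proof (induction j)
  case 0 then show ?case by (simp add: ups_0)
next
  case (Suc j) then show ?case by (simp add: ups_Suc)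
qed

lemma ups_inactive: "Suc j < length p \<Longrightarrow> upsilon_t p ! Suc j = upsilon_t p ! j \<Longrightarrow> is_perm p
   \<Longrightarrow> p ! Suc j < p ! j"
proof -
  assume a: "Suc j < length p" "upsilon_t p ! Suc j = upsilon_t p ! j" "is_perm p"
  then have "\<not> eta_active p (Suc j)" by (simp add: ups_Suc split: if_splits)
  then have "\<not> p ! j < p ! Suc j" using a(1) by (simp add: eta_active_def letter_def)
  moreover have "p ! j \<noteq> p ! Suc j" using a(1,3) by (simp add: is_perm_def nth_eq_iff_index_eq)
  ultimately show ?thesis by simp
qed

lemma ups_cover: "j < length p \<Longrightarrow> 1 \<le> k \<Longrightarrow> k \<le> upsilon_t p ! j \<Longrightarrow> k \<in> set (upsilon_t p)"
proof (induction j)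
  case 0 then show ?case using ups_0[of p] by (metis le_antisym length_ups nth_mem)
next
  case (Suc j)
  show ?case
  proof (cases "k \<le> upsilon_t p ! j")
    case True then show ?thesis using Suc by simp
  next
    case False then have "k = upsilon_t p ! Suc j" using Suc.prems ups_Suc[of j p] by (auto split: if_splits)
    then show ?thesis using Suc.prems by simp
  qed
qed

lemma perm_nth: "is_perm p \<Longrightarrow> i < length p \<Longrightarrow> 1 \<le> p!i \<and> p!i \<le> length p"
  unfolding is_perm_def using nth_mem by (metis atLeastAtMost_iff)

lemma the_idx: "is_perm p \<Longrightarrow> i < length p \<Longrightarrow>
   (THE j. 1 \<le> j \<and> j \<le> length p \<and> letter p j = p!i) = Suc i"
proof (rule the_equality)
  assume a: "is_perm p" "i < length p"
  show "1 \<le> Suc i \<and> Suc i \<le> length p \<and> letter p (Suc i) = p ! i" using a by (simp add: letter_def)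
  fix j assume b: "1 \<le> j \<and> j \<le> length p \<and> letter p j = p ! i"
  then have "p ! (j - 1) = p ! i" by (simp add: letter_def)
  moreover have "j - 1 < length p" using b by (cases j) auto
  ultimately have "j - 1 = i" using a by (simp add: is_perm_def nth_eq_iff_index_eq)
  then show "j = Suc i" using b by (cases j) auto
qed

lemma eta_nth: "is_perm p \<Longrightarrow> i < length p \<Longrightarrow> eta p ! (p!i - 1) = upsilon_t p ! i"
proof -
  assume a: "is_perm p" "i < length p"
  then have r: "1 \<le> p!i" "p!i \<le> length p" using perm_nth by auto
  have e: "[1..<length p + 1] ! (p!i - 1) = p!i" using r by simp
  have "eta p ! (p!i - 1) = letter (upsilon_t p) (THE j. 1 \<le> j \<and> j \<le> length p \<and> letter p j = p!i)"
    unfolding eta_def using r e by simp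
  then show ?thesis using the_idx[OF a] by (simp add: letter_def)
qed

definition key :: "nat \<times> nat \<Rightarrow> nat \<times> int" where
  "key = (\<lambda>(v, i). (v, - int i))"

lemma gamma_key: "gamma x = map snd (sort_key key (zip x [1..<length x + 1]))"
  by (simp add: gamma_def key_def)

lemma inj_key: "inj_on key A"
  by (auto simp: inj_on_def key_def)

lemma mset_perm: "is_perm p \<Longrightarrow> mset [1..<length p + 1] = mset p"
  unfolding is_perm_def
  by (subst set_eq_iff_mset_eq_distinct[symmetric]) (auto simp: atLeastLessThanSuc_atLeastAtMost)

lemma gamma_eta: assumes p: "is_perm p" shows "gamma (eta p) = p"
proof -
  define x where "x = eta p"
  define n where "n = length p"
  define ys where "ys = map (\<lambda>v. (x!(v-1), v)) p"
  have z: "zip x [1..<n+1] = map (\<lambda>v. (x!(v-1), v)) [1..<n+1]"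
    by (rule nth_equalityI) (auto simp: x_def n_def)
  have "sort_key key (zip x [1..<n+1]) = ys"
  proof (rule sort_key_inj_key_eq)
    show "mset (zip x [1..<n + 1]) = mset ys"
      unfolding z ys_def using mset_perm[OF p] by (simp add: n_def)
    show "inj_on key (set (zip x [1..<n + 1]))" by (rule inj_key)
    show "sorted (map key ys)"
      unfolding sorted_iff_nth_Suc
    proof (intro allI impI)
      fix i assume i: "Suc i < length (map key ys)"
      then have i1: "Suc i < length p" and i0: "i < length p" by (auto simp: ys_def)
      have k: "map key ys ! j = (upsilon_t p ! j, - int (p ! j))" if "j < length p" for j
        using that eta_nth[OF p that] by (simp add: ys_def key_def x_def)
      have le: "upsilon_t p ! i \<le> upsilon_t p ! Suc i" using ups_Suc[OF i1] by simp
      show "map key ys ! i \<le> map key ys ! Suc i"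
      proof (cases "upsilon_t p ! Suc i = upsilon_t p ! i")
        case True
        then have "p ! Suc i < p ! i" using ups_inactive[OF i1 _ p] by simp
        then show ?thesis using True k[OF i0] k[OF i1] by simp
      next
        case False
        then show ?thesis using le k[OF i0] k[OF i1] by simp
      qed
    qed
  qed
  then have "gamma x = map snd ys" by (simp add: gamma_key x_def n_def)
  also have "\<dots> = p" by (simp add: ys_def comp_def)
  finally show ?thesis by (simp add: x_def)
qed

lemma mset_eta: assumes p: "is_perm p" shows "mset (eta p) = mset (upsilon_t p)"
proof -
  define n where "n = length p"
  have e: "eta p = map (\<lambda>v. eta p ! (v - 1)) [1..<n+1]"
    by (rule nth_equalityI) (auto simp: n_def)
  have "mset (eta p) = mset (map (\<lambda>v. eta p ! (v - 1)) p)"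
    by (subst e) (simp only: mset_map mset_perm[OF p, folded n_def])
  also have "map (\<lambda>v. eta p ! (v - 1)) p = map (\<lambda>i. eta p ! (p ! i - 1)) [0..<length p]"
    by (subst map_nth[symmetric, of p]) (simp del: map_nth)
  also have "\<dots> = map (\<lambda>i. upsilon_t p ! i) [0..<length p]"
    using eta_nth[OF p] by simp
  also have "\<dots> = upsilon_t p" by (rule nth_equalityI) auto
  finally show ?thesis .
qed

lemma eta_in: assumes p: "is_perm p"
  shows "eta p \<in> Cay \<and> upsilon_t (gamma (eta p)) = sort (eta p)"
proof -
  have srt: "sort (eta p) = upsilon_t p"
    by (rule properties_for_sort) (use mset_eta[OF p] ups_sorted in auto)
  have st: "set (eta p) = set (upsilon_t p)" using mset_eta[OF p] by (metis set_mset_mset)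
  have c: "eta p \<in> Cay"
    unfolding Cay_def
  proof (intro CollectI conjI allI impI)
    show "0 \<notin> set (eta p)" unfolding st
      by (auto simp: in_set_conv_nth dest: ups_pos)
    fix k assume k: "1 \<le> k \<and> k \<le> Max (insert 0 (set (eta p)))"
    have "Max (insert 0 (set (eta p))) \<in> insert 0 (set (eta p))" by (rule Max_in) auto
    then obtain j where j: "j < length p" "Max (insert 0 (set (eta p))) = upsilon_t p ! j"
      using k unfolding st by (auto simp: in_set_conv_nth)
    show "k \<in> set (eta p)" unfolding st using ups_cover[OF j(1)] k j(2) by simp
  qed
  show ?thesis using c srt gamma_eta[OF p] by simp
qed

lemma sorted_fst: "sorted (map key S) \<Longrightarrow> sorted (map fst S)"
  unfolding sorted_iff_nth_Suc
proof (intro allI impI)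
  fix i assume a: "\<forall>i. Suc i < length (map key S) \<longrightarrow> map key S ! i \<le> map key S ! Suc i"
    and i: "Suc i < length (map fst S)"
  then have "key (S ! i) \<le> key (S ! Suc i)" by auto
  then show "map fst S ! i \<le> map fst S ! Suc i" using i
    by (cases "S ! i"; cases "S ! Suc i") (auto simp: key_def)
qed

lemma from_gamma:
  assumes h: "upsilon_t (gamma x) = sort x"
  shows "is_perm (gamma x) \<and> eta (gamma x) = x"
proof -
  define n where "n = length x"
  define S where "S = sort_key key (zip x [1..<n+1])"
  define q where "q = gamma x"
  have q: "q = map snd S" by (simp add: q_def S_def gamma_key n_def)
  have mS: "mset S = mset (zip x [1..<n+1])" by (simp add: S_def)
  have lS: "length S = n" using mS[THEN mset_eq_length] by (simp add: n_def)
  have fS: "map fst S = sort x"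
  proof (rule properties_for_sort[symmetric])
    have "mset (map fst S) = mset (map fst (zip x [1..<n+1]))" by (simp only: mset_map mS)
    then show "mset (map fst S) = mset x" by (simp add: n_def)
    show "sorted (map fst S)" by (rule sorted_fst) (simp add: S_def)
  qed
  have "mset (map snd S) = mset (map snd (zip x [1..<n+1]))" by (simp only: mset_map mS)
  moreover have "map snd (zip x [1..<n+1]) = [1..<n+1]" by (simp add: n_def)
  ultimately have mq: "mset q = mset [1..<n+1]" by (simp only: q)
  have dq: "distinct q" using mq by (metis distinct_upt mset_eq_imp_distinct_iff)
  have sq: "set q = {1..n}" using mq[THEN mset_eq_setD] by (auto simp: atLeastLessThanSuc_atLeastAtMost)
  have lq: "length q = n" using lS q by simp
  have pq: "is_perm q" using dq sq lq by (simp add: is_perm_def)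
  have key: "x ! (q ! j - 1) = sort x ! j" if j: "j < n" for j
  proof -
    have "S ! j \<in> set (zip x [1..<n+1])" using mS[THEN mset_eq_setD] j lS by (metis nth_mem)
    moreover have "S ! j = (sort x ! j, q ! j)"
      using fS q j lS by (metis nth_map prod.collapse)
    ultimately obtain k where k: "k < n" "x ! k = sort x ! j" "[1..<n+1] ! k = q ! j"
      by (auto simp: in_set_zip n_def)
    then have "q ! j = Suc k" by simp
    then show ?thesis using k by simp
  qed
  have "eta q = x"
  proof (rule nth_equalityI)
    show "length (eta q) = length x" using lq by (simp add: n_def)
    fix v assume v: "v < length (eta q)"
    then have "Suc v \<in> set q" using sq lq by simp
    then obtain j where j: "j < n" "q ! j = Suc v" using lq by (auto simp: in_set_conv_nth)
    have "eta q ! v = eta q ! (q ! j - 1)" using j by simp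
    also have "\<dots> = upsilon_t q ! j" using eta_nth[OF pq, of j] j lq by simp
    also have "\<dots> = sort x ! j" using h q_def by simp
    also have "\<dots> = x ! v" using key[OF j(1)] j by simp
    finally show "eta q ! v = x ! v" .
  qed
  then show ?thesis using pq q_def by simp
qed

theorem lemma7p4:
  shows "Xset = {x \<in> Cay. upsilon_t (gamma x) = sort x}"
proof
  show "Xset \<subseteq> {x \<in> Cay. upsilon_t (gamma x) = sort x}"
    unfolding Xset_def using eta_in by auto
  show "{x \<in> Cay. upsilon_t (gamma x) = sort x} \<subseteq> Xset"
  proof
    fix x assume "x \<in> {x \<in> Cay. upsilon_t (gamma x) = sort x}"
    then have "is_perm (gamma x) \<and> eta (gamma x) = x" using from_gamma by auto
    then show "x \<in> Xset" unfolding Xset_def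
      by (intro CollectI exI[of _ "gamma x"]) auto
  qed
qed

end
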